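(* Let $\vec B_0$ be the oriented graph with vertex set $\{x_1,\dots,x_8\}$ and arcs $x_5x_4,\ x_6x_4,\ x_7x_4,\ x_4x_1,\ x_4x_2,\ x_4x_3,\ x_1x_2,\ x_2x_3,\ x_5x_6,\ x_6x_7$ and $x_8x_i$ for all $i\in\{1,\dots,7\}$. Then $\vec B_0$ is planar and $\chi_p([\vec B_0])=8$; more precisely, under any homomorphism of any presentation of $[\vec B_0]$ to any oriented graph, the eight vertices have pairwise distinct images.
   Context: An oriented graph is a directed graph with no loops and no pair of opposite arcs. A homomorphism of oriented graphs $\vec G\to\vec H$ is a vertex map sending every arc $uv$ to an arc $\varphi(u)\varphi(v)$. To push a vertex means to reverse all arcs incident with it; the push graph $[\vec G]$ is the set of oriented graphs obtainable from $\vec G$ by pushing some set of vertices (its presentations). The push chromatic number $\chi_p([\vec G])$ is the minimum number of vertices of an oriented graph $\vec H$ such that some presentation of $[\vec G]$ admits a homomorphism to $\vec H$. *)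

theory Defs
  imports "HOL-Analysis.Analysis"
begin

definition oriented :: "'a set \<Rightarrow> ('a \<times> 'a) set \<Rightarrow> bool" where
  "oriented V A \<longleftrightarrow> A \<subseteq> V \<times> V \<and> (\<forall>u v. (u, v) \<in> A \<longrightarrow> u \<noteq> v \<and> (v, u) \<notin> A)"

text \<open>Pushing the set S of vertices: an arc is reversed iff exactly one endpoint lies in S
  (pushing each vertex of S once).\<close>
definition push :: "'a set \<Rightarrow> ('a \<times> 'a) set \<Rightarrow> ('a \<times> 'a) set" where
  "push S A = {(u, v). (u, v) \<in> A \<and> (u \<in> S \<longleftrightarrow> v \<in> S)}
            \<union> {(v, u) | u v. (u, v) \<in> A \<and> \<not> (u \<in> S \<longleftrightarrow> v \<in> S)}"

definition presentations :: "'a set \<Rightarrow> ('a \<times> 'a) set \<Rightarrow> ('a \<times> 'a) set set" where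
  "presentations V A = {push S A | S. S \<subseteq> V}"

definition ohom :: "'a set \<Rightarrow> ('a \<times> 'a) set \<Rightarrow> 'b set \<Rightarrow> ('b \<times> 'b) set \<Rightarrow> ('a \<Rightarrow> 'b) \<Rightarrow> bool" where
  "ohom V A W B f \<longleftrightarrow> (\<forall>v\<in>V. f v \<in> W) \<and> (\<forall>u v. (u, v) \<in> A \<longrightarrow> (f u, f v) \<in> B)"

text \<open>Push chromatic number: least number of vertices of a (finite) oriented graph H such that
  some presentation admits a homomorphism to H. Target vertices are taken from nat w.l.o.g.\<close>
definition push_chromatic_number :: "'a set \<Rightarrow> ('a \<times> 'a) set \<Rightarrow> nat" where
  "push_chromatic_number V A = (LEAST k. \<exists>A' \<in> presentations V A. \<exists>(W :: nat set) B f.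
      finite W \<and> card W = k \<and> oriented W B \<and> ohom V A' W B f)"

definition planar :: "'a set \<Rightarrow> ('a \<times> 'a) set \<Rightarrow> bool" where
  "planar V A \<longleftrightarrow> (\<exists>(p :: 'a \<Rightarrow> complex) (g :: 'a \<times> 'a \<Rightarrow> real \<Rightarrow> complex).
      inj_on p V \<and>
      (\<forall>e\<in>A. arc (g e) \<and> pathstart (g e) = p (fst e) \<and> pathfinish (g e) = p (snd e)) \<and>
      (\<forall>e\<in>A. \<forall>v\<in>V. p v \<in> path_image (g e) \<longrightarrow> v = fst e \<or> v = snd e) \<and>
      (\<forall>e\<in>A. \<forall>e'\<in>A. e \<noteq> e' \<longrightarrow>
          path_image (g e) \<inter> path_image (g e') \<subseteq> p ` ({fst e, snd e} \<inter> {fst e', snd e'})))"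

text \<open>The oriented graph B0 on vertices x1..x8 (represented by 1..8).\<close>
definition B0_V :: "nat set" where "B0_V = {1..8}"

definition B0_A :: "(nat \<times> nat) set" where
  "B0_A = {(5,4), (6,4), (7,4), (4,1), (4,2), (4,3), (1,2), (2,3), (5,6), (6,7)}
          \<union> {(8, i) | i. i \<in> {1..7}}"

end

theory Submission
  imports Defs
begin

lemma B0_ori: "oriented B0_V B0_A"
  unfolding oriented_def B0_V_def B0_A_def by auto

lemma hf:
  assumes h: "ohom V (push S A) W B f" and a: "(a,b) \<in> A"
  shows "if (a \<in> S \<longleftrightarrow> b \<in> S) then (f a, f b) \<in> B else (f b, f a) \<in> B"
  using h a unfolding ohom_def push_def by auto

lemma inj_B0:
  fixes f :: "nat \<Rightarrow> 'b"
  assumes O: "oriented W B" and h: "ohom B0_V (push S B0_A) W B f"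
  shows "inj_on f B0_V"
proof -
  have ob: "\<And>x y. (x,y) \<in> B \<Longrightarrow> (y,x) \<in> B \<Longrightarrow> False" and nl: "\<And>x. (x,x) \<in> B \<Longrightarrow> False"
    using O unfolding oriented_def by auto
  note H = hf[OF h, unfolded B0_A_def]
  have e: "\<And>a b. (a,b) \<in> {(5,4), (6,4), (7,4), (4,1), (4,2), (4,3), (1,2), (2,3), (5,6), (6,7)}
          \<union> {(8, i) | i. i \<in> {1..7}} \<Longrightarrow> if (a \<in> S \<longleftrightarrow> b \<in> S) then (f a, f b) \<in> B else (f b, f a) \<in> B"
    by (rule H)
  note E = e[of 5 4] e[of 6 4] e[of 7 4] e[of 4 1] e[of 4 2] e[of 4 3] e[of 1 2] e[of 2 3] e[of 5 6] e[of 6 7]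
     e[of 8 1] e[of 8 2] e[of 8 3] e[of 8 4] e[of 8 5] e[of 8 6] e[of 8 7]
  have E2: "if (a \<in> S \<longleftrightarrow> b \<in> S) then (f a, f b) \<in> B else (f b, f a) \<in> B" if 
     "(a,b) \<in> {(5,4), (6,4), (7,4), (4,1), (4,2), (4,3), (1,2), (2,3), (5,6), (6,7),(8,1),(8,2),(8,3),(8,4),(8,5),(8,6),(8,7)}" for a b
    using that E by auto
  have "f 1 \<noteq> f 2" using E2[of 1 2] by (auto split: if_splits dest: ob nl)
  moreover have "f 1 \<noteq> f 3" using E2[of 4 1] E2[of 4 3] E2[of 1 2] E2[of 2 3] by (auto split: if_splits dest: ob nl)
  moreover have "f 1 \<noteq> f 4" using E2[of 4 1] by (auto split: if_splits dest: ob nl)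
  moreover have "f 1 \<noteq> f 5" using E2[of 4 1] E2[of 5 4] E2[of 8 1] E2[of 8 5] by (auto split: if_splits dest: ob nl)
  moreover have "f 1 \<noteq> f 6" using E2[of 4 1] E2[of 6 4] E2[of 8 1] E2[of 8 6] by (auto split: if_splits dest: ob nl)
  moreover have "f 1 \<noteq> f 7" using E2[of 4 1] E2[of 7 4] E2[of 8 1] E2[of 8 7] by (auto split: if_splits dest: ob nl)
  moreover have "f 1 \<noteq> f 8" using E2[of 8 1] by (auto split: if_splits dest: ob nl)
  moreover have "f 2 \<noteq> f 3" using E2[of 2 3] by (auto split: if_splits dest: ob nl)
  moreover have "f 2 \<noteq> f 4" using E2[of 4 2] by (auto split: if_splits dest: ob nl)
  moreover have "f 2 \<noteq> f 5" using E2[of 4 2] E2[of 5 4] E2[of 8 2] E2[of 8 5] by (auto split: if_splits dest: ob nl)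
  moreover have "f 2 \<noteq> f 6" using E2[of 4 2] E2[of 6 4] E2[of 8 2] E2[of 8 6] by (auto split: if_splits dest: ob nl)
  moreover have "f 2 \<noteq> f 7" using E2[of 4 2] E2[of 7 4] E2[of 8 2] E2[of 8 7] by (auto split: if_splits dest: ob nl)
  moreover have "f 2 \<noteq> f 8" using E2[of 8 2] by (auto split: if_splits dest: ob nl)
  moreover have "f 3 \<noteq> f 4" using E2[of 4 3] by (auto split: if_splits dest: ob nl)
  moreover have "f 3 \<noteq> f 5" using E2[of 4 3] E2[of 5 4] E2[of 8 3] E2[of 8 5] by (auto split: if_splits dest: ob nl)
  moreover have "f 3 \<noteq> f 6" using E2[of 4 3] E2[of 6 4] E2[of 8 3] E2[of 8 6] by (auto split: if_splits dest: ob nl)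
  moreover have "f 3 \<noteq> f 7" using E2[of 4 3] E2[of 7 4] E2[of 8 3] E2[of 8 7] by (auto split: if_splits dest: ob nl)
  moreover have "f 3 \<noteq> f 8" using E2[of 8 3] by (auto split: if_splits dest: ob nl)
  moreover have "f 4 \<noteq> f 5" using E2[of 5 4] by (auto split: if_splits dest: ob nl)
  moreover have "f 4 \<noteq> f 6" using E2[of 6 4] by (auto split: if_splits dest: ob nl)
  moreover have "f 4 \<noteq> f 7" using E2[of 7 4] by (auto split: if_splits dest: ob nl)
  moreover have "f 4 \<noteq> f 8" using E2[of 8 4] by (auto split: if_splits dest: ob nl)
  moreover have "f 5 \<noteq> f 6" using E2[of 5 6] by (auto split: if_splits dest: ob nl)
  moreover have "f 5 \<noteq> f 7" using E2[of 5 4] E2[of 7 4] E2[of 5 6] E2[of 6 7] by (auto split: if_splits dest: ob nl)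
  moreover have "f 5 \<noteq> f 8" using E2[of 8 5] by (auto split: if_splits dest: ob nl)
  moreover have "f 6 \<noteq> f 7" using E2[of 6 7] by (auto split: if_splits dest: ob nl)
  moreover have "f 6 \<noteq> f 8" using E2[of 8 6] by (auto split: if_splits dest: ob nl)
  moreover have "f 7 \<noteq> f 8" using E2[of 8 7] by (auto split: if_splits dest: ob nl)
  moreover have V: "B0_V = {1,2,3,4,5,6,7,8}" by (auto simp: B0_V_def)
  ultimately show ?thesis unfolding inj_on_def V by auto
qed
lemma I7: "{1..7::nat} = {1,2,3,4,5,6,7}" by (auto simp: atLeastAtMost_iff) 
lemma im8: "{(8::nat, i) | i. i \<in> X} = Pair 8 ` X" by auto
lemma A_enum: "B0_A = {(8,1),(8,2),(8,3),(8,4),(8,5),(8,6),(8,7),(5,4), (6,4), (7,4), (4,1), (4,2), (4,3), (1,2), (2,3), (5,6), (6,7)}"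
  unfolding B0_A_def I7 im8 by simp
definition pB :: "nat \<Rightarrow> complex" where
  "pB v = (if v = 1 then Complex (-3) 0 else if v = 2 then Complex (-2) 0 else if v = 3 then Complex (-1) 0
     else if v = 4 then Complex 0 (-1) else if v = 5 then Complex 1 0 else if v = 6 then Complex 2 0
     else if v = 7 then Complex 3 0 else Complex 0 1)"
lemma pvals: "pB 1 = Complex (-3) 0" "pB 2 = Complex (-2) 0" "pB 3 = Complex (-1) 0" "pB 4 = Complex 0 (-1)"
  "pB 5 = Complex 1 0" "pB 6 = Complex 2 0" "pB 7 = Complex 3 0" "pB 8 = Complex 0 1" "pB (Suc 0) = Complex (-3) 0"
  by (simp_all add: pB_def)
lemma seg_iff: "z \<in> closed_segment a b \<longleftrightarrow>
   (\<exists>u. 0 \<le> u \<and> u \<le> 1 \<and> Re z = (1-u)*Re a + u*Re b \<and> Im z = (1-u)*Im a + u*Im b)"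
  unfolding closed_segment_def by (auto simp: complex_eq_iff algebra_simps)
definition gB :: "nat \<times> nat \<Rightarrow> real \<Rightarrow> complex" where
  "gB e = linepath (pB (fst e)) (pB (snd e))"
lemma V_enum: "B0_V = {1,2,3,4,5,6,7,8}" unfolding B0_V_def by (auto simp: atLeastAtMost_iff)
lemma inj_pB: "inj_on pB B0_V"
  unfolding inj_on_def V_enum by (auto simp: pvals complex_eq_iff)
lemma arcs: "\<forall>e\<in>B0_A. arc (gB e) \<and> pathstart (gB e) = pB (fst e) \<and> pathfinish (gB e) = pB (snd e)"
  unfolding A_enum gB_def by (simp add: arc_linepath pvals complex_eq_iff)
definition okp :: "nat \<times> nat \<Rightarrow> nat \<times> nat \<Rightarrow> bool" where
  "okp e e' \<longleftrightarrow> path_image (gB e) \<inter> path_image (gB e') \<subseteq> pB ` ({fst e, snd e} \<inter> {fst e', snd e'})"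
definition okv :: "nat \<times> nat \<Rightarrow> nat \<Rightarrow> bool" where
  "okv e v \<longleftrightarrow> (pB v \<in> path_image (gB e) \<longrightarrow> v = fst e \<or> v = snd e)"
lemma okpI: assumes "\<And>z. z \<in> closed_segment (pB a) (pB b) \<Longrightarrow> z \<in> closed_segment (pB c) (pB d) \<Longrightarrow> z \<in> pB ` C"
  and "C = {a,b} \<inter> {c,d}" shows "okp (a,b) (c,d)"
  using assms unfolding okp_def gB_def by auto
lemma okvI: assumes "pB v \<notin> closed_segment (pB a) (pB b)" shows "okv (a,b) v"
  using assms unfolding okv_def gB_def by auto
lemma okvI2: "v = a \<or> v = b \<Longrightarrow> okv (a,b) v"
  unfolding okv_def by auto

lemma p1: "okp (8,1) (8,2)" "okp (8,2) (8,1)"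
  by (auto intro!: okpI[where C="{8}"] simp: pvals seg_iff complex_eq_iff)
lemma p2: "okp (8,1) (8,3)" "okp (8,3) (8,1)"
  by (auto intro!: okpI[where C="{8}"] simp: pvals seg_iff complex_eq_iff)
lemma p3: "okp (8,1) (8,4)" "okp (8,4) (8,1)"
  by (auto intro!: okpI[where C="{8}"] simp: pvals seg_iff complex_eq_iff)
lemma p4: "okp (8,1) (8,5)" "okp (8,5) (8,1)"
  by (auto intro!: okpI[where C="{8}"] simp: pvals seg_iff complex_eq_iff)
lemma p5: "okp (8,1) (8,6)" "okp (8,6) (8,1)"
  by (auto intro!: okpI[where C="{8}"] simp: pvals seg_iff complex_eq_iff)
lemma p6: "okp (8,1) (8,7)" "okp (8,7) (8,1)"
  by (auto intro!: okpI[where C="{8}"] simp: pvals seg_iff complex_eq_iff)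
lemma p7: "okp (8,1) (5,4)" "okp (5,4) (8,1)"
  by (auto intro!: okpI[where C="{}"] simp: pvals seg_iff complex_eq_iff)
lemma p8: "okp (8,1) (6,4)" "okp (6,4) (8,1)"
  by (auto intro!: okpI[where C="{}"] simp: pvals seg_iff complex_eq_iff)
lemma p9: "okp (8,1) (7,4)" "okp (7,4) (8,1)"
  by (auto intro!: okpI[where C="{}"] simp: pvals seg_iff complex_eq_iff)
lemma p10: "okp (8,1) (4,1)" "okp (4,1) (8,1)"
  by (auto intro!: okpI[where C="{1}"] simp: pvals seg_iff complex_eq_iff)
lemma p11: "okp (8,1) (4,2)" "okp (4,2) (8,1)"
  by (auto intro!: okpI[where C="{}"] simp: pvals seg_iff complex_eq_iff)
lemma p12: "okp (8,1) (4,3)" "okp (4,3) (8,1)"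
  by (auto intro!: okpI[where C="{}"] simp: pvals seg_iff complex_eq_iff)
lemma p13: "okp (8,1) (1,2)" "okp (1,2) (8,1)"
  by (auto intro!: okpI[where C="{1}"] simp: pvals seg_iff complex_eq_iff)
lemma p14: "okp (8,1) (2,3)" "okp (2,3) (8,1)"
  by (auto intro!: okpI[where C="{}"] simp: pvals seg_iff complex_eq_iff)
lemma p15: "okp (8,1) (5,6)" "okp (5,6) (8,1)"
  by (auto intro!: okpI[where C="{}"] simp: pvals seg_iff complex_eq_iff)
lemma p16: "okp (8,1) (6,7)" "okp (6,7) (8,1)"
  by (auto intro!: okpI[where C="{}"] simp: pvals seg_iff complex_eq_iff)
lemma p17: "okp (8,2) (8,3)" "okp (8,3) (8,2)"
  by (auto intro!: okpI[where C="{8}"] simp: pvals seg_iff complex_eq_iff)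
lemma p18: "okp (8,2) (8,4)" "okp (8,4) (8,2)"
  by (auto intro!: okpI[where C="{8}"] simp: pvals seg_iff complex_eq_iff)
lemma p19: "okp (8,2) (8,5)" "okp (8,5) (8,2)"
  by (auto intro!: okpI[where C="{8}"] simp: pvals seg_iff complex_eq_iff)
lemma p20: "okp (8,2) (8,6)" "okp (8,6) (8,2)"
  by (auto intro!: okpI[where C="{8}"] simp: pvals seg_iff complex_eq_iff)
lemma p21: "okp (8,2) (8,7)" "okp (8,7) (8,2)"
  by (auto intro!: okpI[where C="{8}"] simp: pvals seg_iff complex_eq_iff)
lemma p22: "okp (8,2) (5,4)" "okp (5,4) (8,2)"
  by (auto intro!: okpI[where C="{}"] simp: pvals seg_iff complex_eq_iff)
lemma p23: "okp (8,2) (6,4)" "okp (6,4) (8,2)"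
  by (auto intro!: okpI[where C="{}"] simp: pvals seg_iff complex_eq_iff)
lemma p24: "okp (8,2) (7,4)" "okp (7,4) (8,2)"
  by (auto intro!: okpI[where C="{}"] simp: pvals seg_iff complex_eq_iff)
lemma p25: "okp (8,2) (4,1)" "okp (4,1) (8,2)"
  by (auto intro!: okpI[where C="{}"] simp: pvals seg_iff complex_eq_iff)
lemma p26: "okp (8,2) (4,2)" "okp (4,2) (8,2)"
  by (auto intro!: okpI[where C="{2}"] simp: pvals seg_iff complex_eq_iff)
lemma p27: "okp (8,2) (4,3)" "okp (4,3) (8,2)"
  by (auto intro!: okpI[where C="{}"] simp: pvals seg_iff complex_eq_iff)
lemma p28: "okp (8,2) (1,2)" "okp (1,2) (8,2)"
  by (auto intro!: okpI[where C="{2}"] simp: pvals seg_iff complex_eq_iff)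
lemma p29: "okp (8,2) (2,3)" "okp (2,3) (8,2)"
  by (auto intro!: okpI[where C="{2}"] simp: pvals seg_iff complex_eq_iff)
lemma p30: "okp (8,2) (5,6)" "okp (5,6) (8,2)"
  by (auto intro!: okpI[where C="{}"] simp: pvals seg_iff complex_eq_iff)
lemma p31: "okp (8,2) (6,7)" "okp (6,7) (8,2)"
  by (auto intro!: okpI[where C="{}"] simp: pvals seg_iff complex_eq_iff)
lemma p32: "okp (8,3) (8,4)" "okp (8,4) (8,3)"
  by (auto intro!: okpI[where C="{8}"] simp: pvals seg_iff complex_eq_iff)
lemma p33: "okp (8,3) (8,5)" "okp (8,5) (8,3)"
  by (auto intro!: okpI[where C="{8}"] simp: pvals seg_iff complex_eq_iff)
lemma p34: "okp (8,3) (8,6)" "okp (8,6) (8,3)"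
  by (auto intro!: okpI[where C="{8}"] simp: pvals seg_iff complex_eq_iff)
lemma p35: "okp (8,3) (8,7)" "okp (8,7) (8,3)"
  by (auto intro!: okpI[where C="{8}"] simp: pvals seg_iff complex_eq_iff)
lemma p36: "okp (8,3) (5,4)" "okp (5,4) (8,3)"
  by (auto intro!: okpI[where C="{}"] simp: pvals seg_iff complex_eq_iff)
lemma p37: "okp (8,3) (6,4)" "okp (6,4) (8,3)"
  by (auto intro!: okpI[where C="{}"] simp: pvals seg_iff complex_eq_iff)
lemma p38: "okp (8,3) (7,4)" "okp (7,4) (8,3)"
  by (auto intro!: okpI[where C="{}"] simp: pvals seg_iff complex_eq_iff)
lemma p39: "okp (8,3) (4,1)" "okp (4,1) (8,3)"
  by (auto intro!: okpI[where C="{}"] simp: pvals seg_iff complex_eq_iff)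
lemma p40: "okp (8,3) (4,2)" "okp (4,2) (8,3)"
  by (auto intro!: okpI[where C="{}"] simp: pvals seg_iff complex_eq_iff)
lemma p41: "okp (8,3) (4,3)" "okp (4,3) (8,3)"
  by (auto intro!: okpI[where C="{3}"] simp: pvals seg_iff complex_eq_iff)
lemma p42: "okp (8,3) (1,2)" "okp (1,2) (8,3)"
  by (auto intro!: okpI[where C="{}"] simp: pvals seg_iff complex_eq_iff)
lemma p43: "okp (8,3) (2,3)" "okp (2,3) (8,3)"
  by (auto intro!: okpI[where C="{3}"] simp: pvals seg_iff complex_eq_iff)
lemma p44: "okp (8,3) (5,6)" "okp (5,6) (8,3)"
  by (auto intro!: okpI[where C="{}"] simp: pvals seg_iff complex_eq_iff)
lemma p45: "okp (8,3) (6,7)" "okp (6,7) (8,3)"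
  by (auto intro!: okpI[where C="{}"] simp: pvals seg_iff complex_eq_iff)
lemma p46: "okp (8,4) (8,5)" "okp (8,5) (8,4)"
  by (auto intro!: okpI[where C="{8}"] simp: pvals seg_iff complex_eq_iff)
lemma p47: "okp (8,4) (8,6)" "okp (8,6) (8,4)"
  by (auto intro!: okpI[where C="{8}"] simp: pvals seg_iff complex_eq_iff)
lemma p48: "okp (8,4) (8,7)" "okp (8,7) (8,4)"
  by (auto intro!: okpI[where C="{8}"] simp: pvals seg_iff complex_eq_iff)
lemma p49: "okp (8,4) (5,4)" "okp (5,4) (8,4)"
  by (auto intro!: okpI[where C="{4}"] simp: pvals seg_iff complex_eq_iff)
lemma p50: "okp (8,4) (6,4)" "okp (6,4) (8,4)"
  by (auto intro!: okpI[where C="{4}"] simp: pvals seg_iff complex_eq_iff)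
lemma p51: "okp (8,4) (7,4)" "okp (7,4) (8,4)"
  by (auto intro!: okpI[where C="{4}"] simp: pvals seg_iff complex_eq_iff)
lemma p52: "okp (8,4) (4,1)" "okp (4,1) (8,4)"
  by (auto intro!: okpI[where C="{4}"] simp: pvals seg_iff complex_eq_iff)
lemma p53: "okp (8,4) (4,2)" "okp (4,2) (8,4)"
  by (auto intro!: okpI[where C="{4}"] simp: pvals seg_iff complex_eq_iff)
lemma p54: "okp (8,4) (4,3)" "okp (4,3) (8,4)"
  by (auto intro!: okpI[where C="{4}"] simp: pvals seg_iff complex_eq_iff)
lemma p55: "okp (8,4) (1,2)" "okp (1,2) (8,4)"
  by (auto intro!: okpI[where C="{}"] simp: pvals seg_iff complex_eq_iff)
lemma p56: "okp (8,4) (2,3)" "okp (2,3) (8,4)"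
  by (auto intro!: okpI[where C="{}"] simp: pvals seg_iff complex_eq_iff)
lemma p57: "okp (8,4) (5,6)" "okp (5,6) (8,4)"
  by (auto intro!: okpI[where C="{}"] simp: pvals seg_iff complex_eq_iff)
lemma p58: "okp (8,4) (6,7)" "okp (6,7) (8,4)"
  by (auto intro!: okpI[where C="{}"] simp: pvals seg_iff complex_eq_iff)
lemma p59: "okp (8,5) (8,6)" "okp (8,6) (8,5)"
  by (auto intro!: okpI[where C="{8}"] simp: pvals seg_iff complex_eq_iff)
lemma p60: "okp (8,5) (8,7)" "okp (8,7) (8,5)"
  by (auto intro!: okpI[where C="{8}"] simp: pvals seg_iff complex_eq_iff)
lemma p61: "okp (8,5) (5,4)" "okp (5,4) (8,5)"
  by (auto intro!: okpI[where C="{5}"] simp: pvals seg_iff complex_eq_iff)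
lemma p62: "okp (8,5) (6,4)" "okp (6,4) (8,5)"
  by (auto intro!: okpI[where C="{}"] simp: pvals seg_iff complex_eq_iff)
lemma p63: "okp (8,5) (7,4)" "okp (7,4) (8,5)"
  by (auto intro!: okpI[where C="{}"] simp: pvals seg_iff complex_eq_iff)
lemma p64: "okp (8,5) (4,1)" "okp (4,1) (8,5)"
  by (auto intro!: okpI[where C="{}"] simp: pvals seg_iff complex_eq_iff)
lemma p65: "okp (8,5) (4,2)" "okp (4,2) (8,5)"
  by (auto intro!: okpI[where C="{}"] simp: pvals seg_iff complex_eq_iff)
lemma p66: "okp (8,5) (4,3)" "okp (4,3) (8,5)"
  by (auto intro!: okpI[where C="{}"] simp: pvals seg_iff complex_eq_iff)
lemma p67: "okp (8,5) (1,2)" "okp (1,2) (8,5)"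
  by (auto intro!: okpI[where C="{}"] simp: pvals seg_iff complex_eq_iff)
lemma p68: "okp (8,5) (2,3)" "okp (2,3) (8,5)"
  by (auto intro!: okpI[where C="{}"] simp: pvals seg_iff complex_eq_iff)
lemma p69: "okp (8,5) (5,6)" "okp (5,6) (8,5)"
  by (auto intro!: okpI[where C="{5}"] simp: pvals seg_iff complex_eq_iff)
lemma p70: "okp (8,5) (6,7)" "okp (6,7) (8,5)"
  by (auto intro!: okpI[where C="{}"] simp: pvals seg_iff complex_eq_iff)
lemma p71: "okp (8,6) (8,7)" "okp (8,7) (8,6)"
  by (auto intro!: okpI[where C="{8}"] simp: pvals seg_iff complex_eq_iff)
lemma p72: "okp (8,6) (5,4)" "okp (5,4) (8,6)"
  by (auto intro!: okpI[where C="{}"] simp: pvals seg_iff complex_eq_iff)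
lemma p73: "okp (8,6) (6,4)" "okp (6,4) (8,6)"
  by (auto intro!: okpI[where C="{6}"] simp: pvals seg_iff complex_eq_iff)
lemma p74: "okp (8,6) (7,4)" "okp (7,4) (8,6)"
  by (auto intro!: okpI[where C="{}"] simp: pvals seg_iff complex_eq_iff)
lemma p75: "okp (8,6) (4,1)" "okp (4,1) (8,6)"
  by (auto intro!: okpI[where C="{}"] simp: pvals seg_iff complex_eq_iff)
lemma p76: "okp (8,6) (4,2)" "okp (4,2) (8,6)"
  by (auto intro!: okpI[where C="{}"] simp: pvals seg_iff complex_eq_iff)
lemma p77: "okp (8,6) (4,3)" "okp (4,3) (8,6)"
  by (auto intro!: okpI[where C="{}"] simp: pvals seg_iff complex_eq_iff)
lemma p78: "okp (8,6) (1,2)" "okp (1,2) (8,6)"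
  by (auto intro!: okpI[where C="{}"] simp: pvals seg_iff complex_eq_iff)
lemma p79: "okp (8,6) (2,3)" "okp (2,3) (8,6)"
  by (auto intro!: okpI[where C="{}"] simp: pvals seg_iff complex_eq_iff)
lemma p80: "okp (8,6) (5,6)" "okp (5,6) (8,6)"
  by (auto intro!: okpI[where C="{6}"] simp: pvals seg_iff complex_eq_iff)
lemma p81: "okp (8,6) (6,7)" "okp (6,7) (8,6)"
  by (auto intro!: okpI[where C="{6}"] simp: pvals seg_iff complex_eq_iff)
lemma p82: "okp (8,7) (5,4)" "okp (5,4) (8,7)"
  by (auto intro!: okpI[where C="{}"] simp: pvals seg_iff complex_eq_iff)
lemma p83: "okp (8,7) (6,4)" "okp (6,4) (8,7)"
  by (auto intro!: okpI[where C="{}"] simp: pvals seg_iff complex_eq_iff)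
lemma p84: "okp (8,7) (7,4)" "okp (7,4) (8,7)"
  by (auto intro!: okpI[where C="{7}"] simp: pvals seg_iff complex_eq_iff)
lemma p85: "okp (8,7) (4,1)" "okp (4,1) (8,7)"
  by (auto intro!: okpI[where C="{}"] simp: pvals seg_iff complex_eq_iff)
lemma p86: "okp (8,7) (4,2)" "okp (4,2) (8,7)"
  by (auto intro!: okpI[where C="{}"] simp: pvals seg_iff complex_eq_iff)
lemma p87: "okp (8,7) (4,3)" "okp (4,3) (8,7)"
  by (auto intro!: okpI[where C="{}"] simp: pvals seg_iff complex_eq_iff)
lemma p88: "okp (8,7) (1,2)" "okp (1,2) (8,7)"
  by (auto intro!: okpI[where C="{}"] simp: pvals seg_iff complex_eq_iff)
lemma p89: "okp (8,7) (2,3)" "okp (2,3) (8,7)"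
  by (auto intro!: okpI[where C="{}"] simp: pvals seg_iff complex_eq_iff)
lemma p90: "okp (8,7) (5,6)" "okp (5,6) (8,7)"
  by (auto intro!: okpI[where C="{}"] simp: pvals seg_iff complex_eq_iff)
lemma p91: "okp (8,7) (6,7)" "okp (6,7) (8,7)"
  by (auto intro!: okpI[where C="{7}"] simp: pvals seg_iff complex_eq_iff)
lemma p92: "okp (5,4) (6,4)" "okp (6,4) (5,4)"
  by (auto intro!: okpI[where C="{4}"] simp: pvals seg_iff complex_eq_iff)
lemma p93: "okp (5,4) (7,4)" "okp (7,4) (5,4)"
  by (auto intro!: okpI[where C="{4}"] simp: pvals seg_iff complex_eq_iff)
lemma p94: "okp (5,4) (4,1)" "okp (4,1) (5,4)"
  by (auto intro!: okpI[where C="{4}"] simp: pvals seg_iff complex_eq_iff)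
lemma p95: "okp (5,4) (4,2)" "okp (4,2) (5,4)"
  by (auto intro!: okpI[where C="{4}"] simp: pvals seg_iff complex_eq_iff)
lemma p96: "okp (5,4) (4,3)" "okp (4,3) (5,4)"
  by (auto intro!: okpI[where C="{4}"] simp: pvals seg_iff complex_eq_iff)
lemma p97: "okp (5,4) (1,2)" "okp (1,2) (5,4)"
  by (auto intro!: okpI[where C="{}"] simp: pvals seg_iff complex_eq_iff)
lemma p98: "okp (5,4) (2,3)" "okp (2,3) (5,4)"
  by (auto intro!: okpI[where C="{}"] simp: pvals seg_iff complex_eq_iff)
lemma p99: "okp (5,4) (5,6)" "okp (5,6) (5,4)"
  by (auto intro!: okpI[where C="{5}"] simp: pvals seg_iff complex_eq_iff)
lemma p100: "okp (5,4) (6,7)" "okp (6,7) (5,4)"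
  by (auto intro!: okpI[where C="{}"] simp: pvals seg_iff complex_eq_iff)
lemma p101: "okp (6,4) (7,4)" "okp (7,4) (6,4)"
  by (auto intro!: okpI[where C="{4}"] simp: pvals seg_iff complex_eq_iff)
lemma p102: "okp (6,4) (4,1)" "okp (4,1) (6,4)"
  by (auto intro!: okpI[where C="{4}"] simp: pvals seg_iff complex_eq_iff)
lemma p103: "okp (6,4) (4,2)" "okp (4,2) (6,4)"
  by (auto intro!: okpI[where C="{4}"] simp: pvals seg_iff complex_eq_iff)
lemma p104: "okp (6,4) (4,3)" "okp (4,3) (6,4)"
  by (auto intro!: okpI[where C="{4}"] simp: pvals seg_iff complex_eq_iff)
lemma p105: "okp (6,4) (1,2)" "okp (1,2) (6,4)"
  by (auto intro!: okpI[where C="{}"] simp: pvals seg_iff complex_eq_iff)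
lemma p106: "okp (6,4) (2,3)" "okp (2,3) (6,4)"
  by (auto intro!: okpI[where C="{}"] simp: pvals seg_iff complex_eq_iff)
lemma p107: "okp (6,4) (5,6)" "okp (5,6) (6,4)"
  by (auto intro!: okpI[where C="{6}"] simp: pvals seg_iff complex_eq_iff)
lemma p108: "okp (6,4) (6,7)" "okp (6,7) (6,4)"
  by (auto intro!: okpI[where C="{6}"] simp: pvals seg_iff complex_eq_iff)
lemma p109: "okp (7,4) (4,1)" "okp (4,1) (7,4)"
  by (auto intro!: okpI[where C="{4}"] simp: pvals seg_iff complex_eq_iff)
lemma p110: "okp (7,4) (4,2)" "okp (4,2) (7,4)"
  by (auto intro!: okpI[where C="{4}"] simp: pvals seg_iff complex_eq_iff)
lemma p111: "okp (7,4) (4,3)" "okp (4,3) (7,4)"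
  by (auto intro!: okpI[where C="{4}"] simp: pvals seg_iff complex_eq_iff)
lemma p112: "okp (7,4) (1,2)" "okp (1,2) (7,4)"
  by (auto intro!: okpI[where C="{}"] simp: pvals seg_iff complex_eq_iff)
lemma p113: "okp (7,4) (2,3)" "okp (2,3) (7,4)"
  by (auto intro!: okpI[where C="{}"] simp: pvals seg_iff complex_eq_iff)
lemma p114: "okp (7,4) (5,6)" "okp (5,6) (7,4)"
  by (auto intro!: okpI[where C="{}"] simp: pvals seg_iff complex_eq_iff)
lemma p115: "okp (7,4) (6,7)" "okp (6,7) (7,4)"
  by (auto intro!: okpI[where C="{7}"] simp: pvals seg_iff complex_eq_iff)
lemma p116: "okp (4,1) (4,2)" "okp (4,2) (4,1)"
  by (auto intro!: okpI[where C="{4}"] simp: pvals seg_iff complex_eq_iff)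
lemma p117: "okp (4,1) (4,3)" "okp (4,3) (4,1)"
  by (auto intro!: okpI[where C="{4}"] simp: pvals seg_iff complex_eq_iff)
lemma p118: "okp (4,1) (1,2)" "okp (1,2) (4,1)"
  by (auto intro!: okpI[where C="{1}"] simp: pvals seg_iff complex_eq_iff)
lemma p119: "okp (4,1) (2,3)" "okp (2,3) (4,1)"
  by (auto intro!: okpI[where C="{}"] simp: pvals seg_iff complex_eq_iff)
lemma p120: "okp (4,1) (5,6)" "okp (5,6) (4,1)"
  by (auto intro!: okpI[where C="{}"] simp: pvals seg_iff complex_eq_iff)
lemma p121: "okp (4,1) (6,7)" "okp (6,7) (4,1)"
  by (auto intro!: okpI[where C="{}"] simp: pvals seg_iff complex_eq_iff)
lemma p122: "okp (4,2) (4,3)" "okp (4,3) (4,2)"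
  by (auto intro!: okpI[where C="{4}"] simp: pvals seg_iff complex_eq_iff)
lemma p123: "okp (4,2) (1,2)" "okp (1,2) (4,2)"
  by (auto intro!: okpI[where C="{2}"] simp: pvals seg_iff complex_eq_iff)
lemma p124: "okp (4,2) (2,3)" "okp (2,3) (4,2)"
  by (auto intro!: okpI[where C="{2}"] simp: pvals seg_iff complex_eq_iff)
lemma p125: "okp (4,2) (5,6)" "okp (5,6) (4,2)"
  by (auto intro!: okpI[where C="{}"] simp: pvals seg_iff complex_eq_iff)
lemma p126: "okp (4,2) (6,7)" "okp (6,7) (4,2)"
  by (auto intro!: okpI[where C="{}"] simp: pvals seg_iff complex_eq_iff)
lemma p127: "okp (4,3) (1,2)" "okp (1,2) (4,3)"
  by (auto intro!: okpI[where C="{}"] simp: pvals seg_iff complex_eq_iff)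
lemma p128: "okp (4,3) (2,3)" "okp (2,3) (4,3)"
  by (auto intro!: okpI[where C="{3}"] simp: pvals seg_iff complex_eq_iff)
lemma p129: "okp (4,3) (5,6)" "okp (5,6) (4,3)"
  by (auto intro!: okpI[where C="{}"] simp: pvals seg_iff complex_eq_iff)
lemma p130: "okp (4,3) (6,7)" "okp (6,7) (4,3)"
  by (auto intro!: okpI[where C="{}"] simp: pvals seg_iff complex_eq_iff)
lemma p131: "okp (1,2) (2,3)" "okp (2,3) (1,2)"
  by (auto intro!: okpI[where C="{2}"] simp: pvals seg_iff complex_eq_iff)
lemma p132: "okp (1,2) (5,6)" "okp (5,6) (1,2)"
  by (auto intro!: okpI[where C="{}"] simp: pvals seg_iff complex_eq_iff)
lemma p133: "okp (1,2) (6,7)" "okp (6,7) (1,2)"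
  by (auto intro!: okpI[where C="{}"] simp: pvals seg_iff complex_eq_iff)
lemma p134: "okp (2,3) (5,6)" "okp (5,6) (2,3)"
  by (auto intro!: okpI[where C="{}"] simp: pvals seg_iff complex_eq_iff)
lemma p135: "okp (2,3) (6,7)" "okp (6,7) (2,3)"
  by (auto intro!: okpI[where C="{}"] simp: pvals seg_iff complex_eq_iff)
lemma p136: "okp (5,6) (6,7)" "okp (6,7) (5,6)"
  by (auto intro!: okpI[where C="{6}"] simp: pvals seg_iff complex_eq_iff)
lemma v0_1: "okv (8,1) 1" by (rule okvI2) simp
lemma v0_2: "okv (8,1) 2" by (rule okvI) (auto simp: pvals seg_iff)
lemma v0_3: "okv (8,1) 3" by (rule okvI) (auto simp: pvals seg_iff)
lemma v0_4: "okv (8,1) 4" by (rule okvI) (auto simp: pvals seg_iff)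
lemma v0_5: "okv (8,1) 5" by (rule okvI) (auto simp: pvals seg_iff)
lemma v0_6: "okv (8,1) 6" by (rule okvI) (auto simp: pvals seg_iff)
lemma v0_7: "okv (8,1) 7" by (rule okvI) (auto simp: pvals seg_iff)
lemma v0_8: "okv (8,1) 8" by (rule okvI2) simp
lemma v1_1: "okv (8,2) 1" by (rule okvI) (auto simp: pvals seg_iff)
lemma v1_2: "okv (8,2) 2" by (rule okvI2) simp
lemma v1_3: "okv (8,2) 3" by (rule okvI) (auto simp: pvals seg_iff)
lemma v1_4: "okv (8,2) 4" by (rule okvI) (auto simp: pvals seg_iff)
lemma v1_5: "okv (8,2) 5" by (rule okvI) (auto simp: pvals seg_iff)
lemma v1_6: "okv (8,2) 6" by (rule okvI) (auto simp: pvals seg_iff)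
lemma v1_7: "okv (8,2) 7" by (rule okvI) (auto simp: pvals seg_iff)
lemma v1_8: "okv (8,2) 8" by (rule okvI2) simp
lemma v2_1: "okv (8,3) 1" by (rule okvI) (auto simp: pvals seg_iff)
lemma v2_2: "okv (8,3) 2" by (rule okvI) (auto simp: pvals seg_iff)
lemma v2_3: "okv (8,3) 3" by (rule okvI2) simp
lemma v2_4: "okv (8,3) 4" by (rule okvI) (auto simp: pvals seg_iff)
lemma v2_5: "okv (8,3) 5" by (rule okvI) (auto simp: pvals seg_iff)
lemma v2_6: "okv (8,3) 6" by (rule okvI) (auto simp: pvals seg_iff)
lemma v2_7: "okv (8,3) 7" by (rule okvI) (auto simp: pvals seg_iff)
lemma v2_8: "okv (8,3) 8" by (rule okvI2) simp
lemma v3_1: "okv (8,4) 1" by (rule okvI) (auto simp: pvals seg_iff)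
lemma v3_2: "okv (8,4) 2" by (rule okvI) (auto simp: pvals seg_iff)
lemma v3_3: "okv (8,4) 3" by (rule okvI) (auto simp: pvals seg_iff)
lemma v3_4: "okv (8,4) 4" by (rule okvI2) simp
lemma v3_5: "okv (8,4) 5" by (rule okvI) (auto simp: pvals seg_iff)
lemma v3_6: "okv (8,4) 6" by (rule okvI) (auto simp: pvals seg_iff)
lemma v3_7: "okv (8,4) 7" by (rule okvI) (auto simp: pvals seg_iff)
lemma v3_8: "okv (8,4) 8" by (rule okvI2) simp
lemma v4_1: "okv (8,5) 1" by (rule okvI) (auto simp: pvals seg_iff)
lemma v4_2: "okv (8,5) 2" by (rule okvI) (auto simp: pvals seg_iff)
lemma v4_3: "okv (8,5) 3" by (rule okvI) (auto simp: pvals seg_iff)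
lemma v4_4: "okv (8,5) 4" by (rule okvI) (auto simp: pvals seg_iff)
lemma v4_5: "okv (8,5) 5" by (rule okvI2) simp
lemma v4_6: "okv (8,5) 6" by (rule okvI) (auto simp: pvals seg_iff)
lemma v4_7: "okv (8,5) 7" by (rule okvI) (auto simp: pvals seg_iff)
lemma v4_8: "okv (8,5) 8" by (rule okvI2) simp
lemma v5_1: "okv (8,6) 1" by (rule okvI) (auto simp: pvals seg_iff)
lemma v5_2: "okv (8,6) 2" by (rule okvI) (auto simp: pvals seg_iff)
lemma v5_3: "okv (8,6) 3" by (rule okvI) (auto simp: pvals seg_iff)
lemma v5_4: "okv (8,6) 4" by (rule okvI) (auto simp: pvals seg_iff)
lemma v5_5: "okv (8,6) 5" by (rule okvI) (auto simp: pvals seg_iff)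
lemma v5_6: "okv (8,6) 6" by (rule okvI2) simp
lemma v5_7: "okv (8,6) 7" by (rule okvI) (auto simp: pvals seg_iff)
lemma v5_8: "okv (8,6) 8" by (rule okvI2) simp
lemma v6_1: "okv (8,7) 1" by (rule okvI) (auto simp: pvals seg_iff)
lemma v6_2: "okv (8,7) 2" by (rule okvI) (auto simp: pvals seg_iff)
lemma v6_3: "okv (8,7) 3" by (rule okvI) (auto simp: pvals seg_iff)
lemma v6_4: "okv (8,7) 4" by (rule okvI) (auto simp: pvals seg_iff)
lemma v6_5: "okv (8,7) 5" by (rule okvI) (auto simp: pvals seg_iff)
lemma v6_6: "okv (8,7) 6" by (rule okvI) (auto simp: pvals seg_iff)
lemma v6_7: "okv (8,7) 7" by (rule okvI2) simp
lemma v6_8: "okv (8,7) 8" by (rule okvI2) simp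
lemma v7_1: "okv (5,4) 1" by (rule okvI) (auto simp: pvals seg_iff)
lemma v7_2: "okv (5,4) 2" by (rule okvI) (auto simp: pvals seg_iff)
lemma v7_3: "okv (5,4) 3" by (rule okvI) (auto simp: pvals seg_iff)
lemma v7_4: "okv (5,4) 4" by (rule okvI2) simp
lemma v7_5: "okv (5,4) 5" by (rule okvI2) simp
lemma v7_6: "okv (5,4) 6" by (rule okvI) (auto simp: pvals seg_iff)
lemma v7_7: "okv (5,4) 7" by (rule okvI) (auto simp: pvals seg_iff)
lemma v7_8: "okv (5,4) 8" by (rule okvI) (auto simp: pvals seg_iff)
lemma v8_1: "okv (6,4) 1" by (rule okvI) (auto simp: pvals seg_iff)
lemma v8_2: "okv (6,4) 2" by (rule okvI) (auto simp: pvals seg_iff)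
lemma v8_3: "okv (6,4) 3" by (rule okvI) (auto simp: pvals seg_iff)
lemma v8_4: "okv (6,4) 4" by (rule okvI2) simp
lemma v8_5: "okv (6,4) 5" by (rule okvI) (auto simp: pvals seg_iff)
lemma v8_6: "okv (6,4) 6" by (rule okvI2) simp
lemma v8_7: "okv (6,4) 7" by (rule okvI) (auto simp: pvals seg_iff)
lemma v8_8: "okv (6,4) 8" by (rule okvI) (auto simp: pvals seg_iff)
lemma v9_1: "okv (7,4) 1" by (rule okvI) (auto simp: pvals seg_iff)
lemma v9_2: "okv (7,4) 2" by (rule okvI) (auto simp: pvals seg_iff)
lemma v9_3: "okv (7,4) 3" by (rule okvI) (auto simp: pvals seg_iff)
lemma v9_4: "okv (7,4) 4" by (rule okvI2) simp
lemma v9_5: "okv (7,4) 5" by (rule okvI) (auto simp: pvals seg_iff)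
lemma v9_6: "okv (7,4) 6" by (rule okvI) (auto simp: pvals seg_iff)
lemma v9_7: "okv (7,4) 7" by (rule okvI2) simp
lemma v9_8: "okv (7,4) 8" by (rule okvI) (auto simp: pvals seg_iff)
lemma v10_1: "okv (4,1) 1" by (rule okvI2) simp
lemma v10_2: "okv (4,1) 2" by (rule okvI) (auto simp: pvals seg_iff)
lemma v10_3: "okv (4,1) 3" by (rule okvI) (auto simp: pvals seg_iff)
lemma v10_4: "okv (4,1) 4" by (rule okvI2) simp
lemma v10_5: "okv (4,1) 5" by (rule okvI) (auto simp: pvals seg_iff)
lemma v10_6: "okv (4,1) 6" by (rule okvI) (auto simp: pvals seg_iff)
lemma v10_7: "okv (4,1) 7" by (rule okvI) (auto simp: pvals seg_iff)
lemma v10_8: "okv (4,1) 8" by (rule okvI) (auto simp: pvals seg_iff)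
lemma v11_1: "okv (4,2) 1" by (rule okvI) (auto simp: pvals seg_iff)
lemma v11_2: "okv (4,2) 2" by (rule okvI2) simp
lemma v11_3: "okv (4,2) 3" by (rule okvI) (auto simp: pvals seg_iff)
lemma v11_4: "okv (4,2) 4" by (rule okvI2) simp
lemma v11_5: "okv (4,2) 5" by (rule okvI) (auto simp: pvals seg_iff)
lemma v11_6: "okv (4,2) 6" by (rule okvI) (auto simp: pvals seg_iff)
lemma v11_7: "okv (4,2) 7" by (rule okvI) (auto simp: pvals seg_iff)
lemma v11_8: "okv (4,2) 8" by (rule okvI) (auto simp: pvals seg_iff)
lemma v12_1: "okv (4,3) 1" by (rule okvI) (auto simp: pvals seg_iff)
lemma v12_2: "okv (4,3) 2" by (rule okvI) (auto simp: pvals seg_iff)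
lemma v12_3: "okv (4,3) 3" by (rule okvI2) simp
lemma v12_4: "okv (4,3) 4" by (rule okvI2) simp
lemma v12_5: "okv (4,3) 5" by (rule okvI) (auto simp: pvals seg_iff)
lemma v12_6: "okv (4,3) 6" by (rule okvI) (auto simp: pvals seg_iff)
lemma v12_7: "okv (4,3) 7" by (rule okvI) (auto simp: pvals seg_iff)
lemma v12_8: "okv (4,3) 8" by (rule okvI) (auto simp: pvals seg_iff)
lemma v13_1: "okv (1,2) 1" by (rule okvI2) simp
lemma v13_2: "okv (1,2) 2" by (rule okvI2) simp
lemma v13_3: "okv (1,2) 3" by (rule okvI) (auto simp: pvals seg_iff)
lemma v13_4: "okv (1,2) 4" by (rule okvI) (auto simp: pvals seg_iff)
lemma v13_5: "okv (1,2) 5" by (rule okvI) (auto simp: pvals seg_iff)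
lemma v13_6: "okv (1,2) 6" by (rule okvI) (auto simp: pvals seg_iff)
lemma v13_7: "okv (1,2) 7" by (rule okvI) (auto simp: pvals seg_iff)
lemma v13_8: "okv (1,2) 8" by (rule okvI) (auto simp: pvals seg_iff)
lemma v14_1: "okv (2,3) 1" by (rule okvI) (auto simp: pvals seg_iff)
lemma v14_2: "okv (2,3) 2" by (rule okvI2) simp
lemma v14_3: "okv (2,3) 3" by (rule okvI2) simp
lemma v14_4: "okv (2,3) 4" by (rule okvI) (auto simp: pvals seg_iff)
lemma v14_5: "okv (2,3) 5" by (rule okvI) (auto simp: pvals seg_iff)
lemma v14_6: "okv (2,3) 6" by (rule okvI) (auto simp: pvals seg_iff)
lemma v14_7: "okv (2,3) 7" by (rule okvI) (auto simp: pvals seg_iff)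
lemma v14_8: "okv (2,3) 8" by (rule okvI) (auto simp: pvals seg_iff)
lemma v15_1: "okv (5,6) 1" by (rule okvI) (auto simp: pvals seg_iff)
lemma v15_2: "okv (5,6) 2" by (rule okvI) (auto simp: pvals seg_iff)
lemma v15_3: "okv (5,6) 3" by (rule okvI) (auto simp: pvals seg_iff)
lemma v15_4: "okv (5,6) 4" by (rule okvI) (auto simp: pvals seg_iff)
lemma v15_5: "okv (5,6) 5" by (rule okvI2) simp
lemma v15_6: "okv (5,6) 6" by (rule okvI2) simp
lemma v15_7: "okv (5,6) 7" by (rule okvI) (auto simp: pvals seg_iff)
lemma v15_8: "okv (5,6) 8" by (rule okvI) (auto simp: pvals seg_iff)
lemma v16_1: "okv (6,7) 1" by (rule okvI) (auto simp: pvals seg_iff)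
lemma v16_2: "okv (6,7) 2" by (rule okvI) (auto simp: pvals seg_iff)
lemma v16_3: "okv (6,7) 3" by (rule okvI) (auto simp: pvals seg_iff)
lemma v16_4: "okv (6,7) 4" by (rule okvI) (auto simp: pvals seg_iff)
lemma v16_5: "okv (6,7) 5" by (rule okvI) (auto simp: pvals seg_iff)
lemma v16_6: "okv (6,7) 6" by (rule okvI2) simp
lemma v16_7: "okv (6,7) 7" by (rule okvI2) simp
lemma v16_8: "okv (6,7) 8" by (rule okvI) (auto simp: pvals seg_iff)
lemma planar_B0: "planar B0_V B0_A"
proof -
  have "\<forall>e\<in>B0_A. \<forall>e'\<in>B0_A. e \<noteq> e' \<longrightarrow> okp e e'"
    unfolding A_enum by (simp add: p1[simplified] p2[simplified] p3[simplified] p4[simplified] p5[simplified] p6[simplified] p7[simplified] p8[simplified] p9[simplified] p10[simplified] p11[simplified] p12[simplified] p13[simplified] p14[simplified] p15[simplified] p16[simplified] p17[simplified] p18[simplified] p19[simplified] p20[simplified] p21[simplified] p22[simplified] p23[simplified] p24[simplified] p25[simplified] p26[simplified] p27[simplified] p28[simplified] p29[simplified] p30[simplified] p31[simplified] p32[simplified] p33[simplified] p34[simplified] p35[simplified] p36[simplified] p37[simplified] p38[simplified] p39[simplified] p40[simplified] p41[simplified] p42[simplified] p43[simplified] p44[simplified] p45[simplified] p46[simplified] p47[simplified] p48[simplified] p49[simplified] p50[simplified] p51[simplified] p52[simplified] p53[simplified] p54[simplified] p55[simplified] p56[simplified] p57[simplified] p58[simplified] p59[simplified] p60[simplified] p61[simplified]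 p62[simplified] p63[simplified] p64[simplified] p65[simplified] p66[simplified] p67[simplified] p68[simplified] p69[simplified] p70[simplified] p71[simplified] p72[simplified] p73[simplified] p74[simplified] p75[simplified] p76[simplified] p77[simplified] p78[simplified] p79[simplified] p80[simplified] p81[simplified] p82[simplified] p83[simplified] p84[simplified] p85[simplified] p86[simplified] p87[simplified] p88[simplified] p89[simplified] p90[simplified] p91[simplified] p92[simplified] p93[simplified] p94[simplified] p95[simplified] p96[simplified] p97[simplified] p98[simplified] p99[simplified] p100[simplified] p101[simplified] p102[simplified] p103[simplified] p104[simplified] p105[simplified] p106[simplified] p107[simplified] p108[simplified] p109[simplified] p110[simplified] p111[simplified] p112[simplified] p113[simplified] p114[simplified] p115[simplified] p116[simplified] p117[simplified] p118[simplified] p119[simplified] p120[simplified] p121[simplified] p122[simplified] p123[simplified] p124[simplified] p125[simplified] p126[simplified] p127[simplified] p128[simplified] p129[simplified] p130[simplified] p131[simplified] p132[simplified] p133[simplified] p134[simplified] p135[simplified] p136[simplified])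
  moreover have "\<forall>e\<in>B0_A. \<forall>v\<in>B0_V. okv e v"
    unfolding A_enum V_enum by (simp add: v0_1[simplified] v0_2[simplified] v0_3[simplified] v0_4[simplified] v0_5[simplified] v0_6[simplified] v0_7[simplified] v0_8[simplified] v1_1[simplified] v1_2[simplified] v1_3[simplified] v1_4[simplified] v1_5[simplified] v1_6[simplified] v1_7[simplified] v1_8[simplified] v2_1[simplified] v2_2[simplified] v2_3[simplified] v2_4[simplified] v2_5[simplified] v2_6[simplified] v2_7[simplified] v2_8[simplified] v3_1[simplified] v3_2[simplified] v3_3[simplified] v3_4[simplified] v3_5[simplified] v3_6[simplified] v3_7[simplified] v3_8[simplified] v4_1[simplified] v4_2[simplified] v4_3[simplified] v4_4[simplified] v4_5[simplified] v4_6[simplified] v4_7[simplified] v4_8[simplified] v5_1[simplified] v5_2[simplified] v5_3[simplified] v5_4[simplified] v5_5[simplified] v5_6[simplified] v5_7[simplified] v5_8[simplified] v6_1[simplified] v6_2[simplified] v6_3[simplified] v6_4[simplified] v6_5[simplified] v6_6[simplified] v6_7[simplified] v6_8[simplified] v7_1[simplified] v7_2[simplified] v7_3[simplified] v7_4[simplified] v7_5[simplified] v7_6[simplified] v7_7[simplified] v7_8[simplified] v8_1[simplified] v8_2[simplified] v8_3[simplified] v8_4[simplified] v8_5[simplified] v8_6[simplified] v8_7[simplified] v8_8[simplified] v9_1[simplified] v9_2[simplified] v9_3[simplified] v9_4[simplified] v9_5[simplified] v9_6[simplified] v9_7[simplified] v9_8[simplified] v10_1[simplified] v10_2[simplified]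 v10_3[simplified] v10_4[simplified] v10_5[simplified] v10_6[simplified] v10_7[simplified] v10_8[simplified] v11_1[simplified] v11_2[simplified] v11_3[simplified] v11_4[simplified] v11_5[simplified] v11_6[simplified] v11_7[simplified] v11_8[simplified] v12_1[simplified] v12_2[simplified] v12_3[simplified] v12_4[simplified] v12_5[simplified] v12_6[simplified] v12_7[simplified] v12_8[simplified] v13_1[simplified] v13_2[simplified] v13_3[simplified] v13_4[simplified] v13_5[simplified] v13_6[simplified] v13_7[simplified] v13_8[simplified] v14_1[simplified] v14_2[simplified] v14_3[simplified] v14_4[simplified] v14_5[simplified] v14_6[simplified] v14_7[simplified] v14_8[simplified] v15_1[simplified] v15_2[simplified] v15_3[simplified] v15_4[simplified] v15_5[simplified] v15_6[simplified] v15_7[simplified] v15_8[simplified] v16_1[simplified] v16_2[simplified] v16_3[simplified] v16_4[simplified] v16_5[simplified] v16_6[simplified] v16_7[simplified] v16_8[simplified])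
  ultimately show ?thesis unfolding planar_def okp_def okv_def
    using inj_pB arcs by blast
qed

lemma push_empty: "push {} A = A"
  unfolding push_def by auto

lemma card_V: "card B0_V = 8" unfolding B0_V_def by simp

lemma chi_B0: "push_chromatic_number B0_V B0_A = 8"
  unfolding push_chromatic_number_def
proof (rule Least_equality)
  show "\<exists>A'\<in>presentations B0_V B0_A. \<exists>(W :: nat set) B f. finite W \<and> card W = 8 \<and> oriented W B \<and> ohom B0_V A' W B f"
  proof (intro bexI exI conjI)
    show "B0_A \<in> presentations B0_V B0_A" unfolding presentations_def
      using push_empty[of B0_A] by blast
    show "finite B0_V" by (simp add: B0_V_def)
    show "card B0_V = 8" by (rule card_V)
    show "oriented B0_V B0_A" by (rule B0_ori)
    show "ohom B0_V B0_A B0_V B0_A id" unfolding ohom_def by simp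
  qed
next
  fix k assume "\<exists>A'\<in>presentations B0_V B0_A. \<exists>(W :: nat set) B f. finite W \<and> card W = k \<and> oriented W B \<and> ohom B0_V A' W B f"
  then obtain S W B and f :: "nat \<Rightarrow> nat" where "finite W" "card W = k" "oriented W B" "ohom B0_V (push S B0_A) W B f"
    unfolding presentations_def by blast
  moreover have "inj_on f B0_V" using inj_B0 calculation by blast
  moreover have "f ` B0_V \<subseteq> W" using calculation unfolding ohom_def by auto
  ultimately have "card (f ` B0_V) \<le> k" by (metis card_mono)
  then show "8 \<le> k" using \<open>inj_on f B0_V\<close> card_V by (simp add: card_image)
qed

theorem mainTheorem9:
  shows "oriented B0_V B0_A \<and> planar B0_V B0_A \<and> push_chromatic_number B0_V B0_A = 8 \<and>
    (\<forall>A' \<in> presentations B0_V B0_A. \<forall>(W :: 'b set) B f.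
        oriented W B \<and> ohom B0_V A' W B f \<longrightarrow> inj_on f B0_V)"
  using B0_ori planar_B0 chi_B0 inj_B0 unfolding presentations_def by blast

end
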